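(* Let $k\ge2$, $n\ge1$, $A=\{0<1<\cdots<k-1\}$, and let $M$ be a de Bruijn set of span $n$ over $A$. Then $M$ contains a necklace of length at least $n$.
   Context: A word is primitive if not a proper power of another word; a necklace is the set of conjugates ($xy\sim yx$) of a primitive word, and its length is the length of its words. A multiset $M=\{n_{1},\dots,n_{t}\}$ of necklaces is a de Bruijn set of span $n$ over $A$ if $|n_{1}|+\cdots+|n_{t}|=k^{n}$ and every word of $A^{n}$ is a prefix of some power of some word belonging to one of the $n_{i}$. *)

theory Defs
  imports Main "HOL-Library.Multiset" "HOL-Library.Sublist"
begin

definition word_pow :: "'a list \<Rightarrow> nat \<Rightarrow> 'a list" where
  "word_pow u m = concat (replicate m u)"

definition primitive :: "'a list \<Rightarrow> bool" where
  "primitive w \<longleftrightarrow> w \<noteq> [] \<and> \<not> (\<exists>u m. m \<ge> 2 \<and> w = word_pow u m)"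

definition conjugates :: "'a list \<Rightarrow> 'a list set" where
  "conjugates w = {v. \<exists>x y. w = x @ y \<and> v = y @ x}"

definition is_necklace :: "'a set \<Rightarrow> 'a list set \<Rightarrow> bool" where
  "is_necklace A N \<longleftrightarrow> (\<exists>w. primitive w \<and> set w \<subseteq> A \<and> N = conjugates w)"

definition necklace_length :: "'a list set \<Rightarrow> nat" where
  "necklace_length N = length (SOME w. w \<in> N)"

definition de_bruijn_set :: "nat \<Rightarrow> nat \<Rightarrow> nat list set multiset \<Rightarrow> bool" where
  "de_bruijn_set k n M \<longleftrightarrow>
     (\<forall>N\<in>#M. is_necklace {0..<k} N) \<and>
     (\<Sum>N\<in>#M. necklace_length N) = k ^ n \<and>
     (\<forall>u. length u = n \<and> set u \<subseteq> {0..<k} \<longrightarrow>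
        (\<exists>N\<in>#M. \<exists>w\<in>N. \<exists>m. prefix u (word_pow w m)))"

end

theory Submission
  imports Defs
begin

lemma word_pow_zeros: "word_pow (replicate d (0::nat)) m = replicate (d*m) 0"
  by (induction m) (auto simp: word_pow_def replicate_add)

theorem lemma3p3:
  fixes k n :: nat and M :: "nat list set multiset"
  assumes "k \<ge> 2" and "n \<ge> 1" and "de_bruijn_set k n M"
  shows "\<exists>N\<in>#M. necklace_length N \<ge> n"
proof -
  define u :: "nat list" where "u = replicate (n-1) 0 @ [1]"
  have lu: "length u = n" using assms(2) by (simp add: u_def)
  have su: "set u \<subseteq> {0..<k}" using assms(1) by (auto simp: u_def)
  obtain N w m where N: "N \<in># M" and wN: "w \<in> N" and pre: "prefix u (word_pow w m)"
    using assms(3) lu su unfolding de_bruijn_set_def by blast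
  obtain w0 where w0: "primitive w0" "N = conjugates w0"
    using assms(3) N unfolding de_bruijn_set_def is_necklace_def by blast
  have lenN: "\<And>v. v \<in> N \<Longrightarrow> length v = length w0"
    using w0(2) by (auto simp: conjugates_def)
  have "w0 \<in> N" using w0(2) unfolding conjugates_def by blast
  hence "(SOME v. v \<in> N) \<in> N" by (rule someI)
  hence nl: "necklace_length N = length w" using lenN wN by (simp add: necklace_length_def)
  have "length w \<ge> n"
  proof (rule ccontr)
    assume "\<not> n \<le> length w"
    hence lt: "length w < n" by simp
    have "m \<noteq> 0" proof assume "m = 0" thus False using pre by (simp add: word_pow_def u_def) qed
    then obtain m' where m: "m = Suc m'" by (cases m) auto
    have p1: "prefix u (w @ word_pow w m')" using pre m by (simp add: word_pow_def)
    have p2: "prefix w (w @ word_pow w m')" by simp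
    have "prefix w u \<or> prefix u w" using prefix_same_cases[OF p2 p1] .
    hence "prefix w u" using lt lu prefix_length_le by fastforce
    hence "w = take (length w) u" by (auto simp: prefix_def)
    hence wz: "w = replicate (length w) 0" using lt by (simp add: u_def)
    have "1 \<in> set u" by (simp add: u_def)
    hence "1 \<in> set (word_pow w m)" using pre set_mono_prefix by blast
    moreover have "set (word_pow w m) \<subseteq> {0}" by (subst wz) (simp add: word_pow_zeros set_replicate_conv_if)
    ultimately show False by auto
  qed
  thus ?thesis using N nl by (intro bexI[of _ N]) simp_all
qed

end
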